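(* Let $K,L$ be Markov kernels on a measurable space $S$, and let $(K^{(n)})_{n\ge2}$ and $(L^{(n)})_{n\ge2}$ be consistent extensions of $K$ and $L$ respectively. Then $(K^{(n)}L^{(n)})_{n\ge2}$ is a consistent extension of $KL$.
   Context: Composition: $(KL)(x,B)=\int L(y,B)K(x,dy)$. For $i_1,\dots,i_k\in\{1,\dots,n\}$ (repetitions allowed), $\pi^n_{i_1,\dots,i_k}(x_1,\dots,x_n)=(x_{i_1},\dots,x_{i_k})$. A family $(K^{(n)})_{n\ge1}$, $K^{(n)}$ a Markov kernel on $S^n$ with the product $\sigma$-algebra, is consistent if $K^{(n)}(\mathbf{x},(\pi^n_{i_1,\dots,i_k})^{-1}(B))=K^{(k)}(\pi^n_{i_1,\dots,i_k}(\mathbf{x}),B)$ for all $1\le k\le n$, all $i_1,\dots,i_k$, all $\mathbf{x}\in S^n$ and measurable $B\subset S^k$. A family $(K^{(n)})_{n\ge2}$ is a consistent extension of a kernel $K$ on $S$ if $(K^{(n)})_{n\ge1}$ with $K^{(1)}=K$ is consistent. *)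

theory Defs
  imports "HOL-Probability.Probability"
begin

definition powS :: "'a measure \<Rightarrow> nat \<Rightarrow> (nat \<Rightarrow> 'a) measure" where
  "powS S n = PiM {..<n} (\<lambda>_. S)"

definition markov_kernel :: "'b measure \<Rightarrow> ('b \<Rightarrow> 'b measure) \<Rightarrow> bool" where
  "markov_kernel M K \<longleftrightarrow> K \<in> M \<rightarrow>\<^sub>M prob_algebra M"

text \<open>Composition (KL)(x,B) = int L(y,B) K(x,dy).\<close>
definition kcomp :: "('b \<Rightarrow> 'b measure) \<Rightarrow> ('b \<Rightarrow> 'b measure) \<Rightarrow> ('b \<Rightarrow> 'b measure)" where
  "kcomp K L = (\<lambda>x. K x \<bind> L)"

text \<open>Projection pi^n_{i_1..i_k}, with 0-based indices given by idx : {0..<k} -> {0..<n}.\<close>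
definition proj :: "nat \<Rightarrow> (nat \<Rightarrow> nat) \<Rightarrow> (nat \<Rightarrow> 'a) \<Rightarrow> (nat \<Rightarrow> 'a)" where
  "proj k idx x = (\<lambda>j\<in>{..<k}. x (idx j))"

definition consistent :: "'a measure \<Rightarrow> (nat \<Rightarrow> (nat \<Rightarrow> 'a) \<Rightarrow> (nat \<Rightarrow> 'a) measure) \<Rightarrow> bool" where
  "consistent S F \<longleftrightarrow>
     (\<forall>n\<ge>1. markov_kernel (powS S n) (F n)) \<and>
     (\<forall>n k idx x B. 1 \<le> k \<and> k \<le> n \<and> (\<forall>i<k. idx i < n) \<and>
        x \<in> space (powS S n) \<and> B \<in> sets (powS S k) \<longrightarrow>
        emeasure (F n x) (proj k idx -` B \<inter> space (powS S n)) = emeasure (F k (proj k idx x)) B)"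

definition lift1 :: "'a measure \<Rightarrow> ('a \<Rightarrow> 'a measure) \<Rightarrow> (nat \<Rightarrow> 'a) \<Rightarrow> (nat \<Rightarrow> 'a) measure" where
  "lift1 S K = (\<lambda>x. distr (K (x 0)) (powS S 1) (\<lambda>y. \<lambda>j\<in>{..<1::nat}. y))"

text \<open>(F n)_{n>=2} is a consistent extension of K: the family with F 1 := K is consistent.\<close>
definition consistent_extension ::
  "'a measure \<Rightarrow> ('a \<Rightarrow> 'a measure) \<Rightarrow> (nat \<Rightarrow> (nat \<Rightarrow> 'a) \<Rightarrow> (nat \<Rightarrow> 'a) measure) \<Rightarrow> bool" where
  "consistent_extension S K F \<longleftrightarrow>
     consistent S (\<lambda>n. if n = 1 then lift1 S K else F n)"

end

theory Submission
  imports Defs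
begin

lemma proj_meas: "(\<forall>i<k. idx i < n) \<Longrightarrow> proj k idx \<in> powS S n \<rightarrow>\<^sub>M powS S k"
  unfolding proj_def powS_def
  by (intro measurable_restrict measurable_component_singleton) auto

lemma cons_bind:
  assumes F: "consistent S F" and G: "consistent S G"
    and H: "\<forall>n\<ge>1. \<forall>x\<in>space (powS S n). H n x = F n x \<bind> G n"
  shows "consistent S H"
  unfolding consistent_def
proof (intro conjI allI impI)
  fix n :: nat assume n: "1 \<le> n"
  have "(\<lambda>x. F n x \<bind> G n) \<in> powS S n \<rightarrow>\<^sub>M prob_algebra (powS S n)"
    using F G n unfolding consistent_def markov_kernel_def
    by (intro measurable_bind_prob_space) auto
  then show "markov_kernel (powS S n) (H n)"
    unfolding markov_kernel_def using H n by (subst measurable_cong) auto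
next
  fix n k idx x B
  assume a: "1 \<le> k \<and> k \<le> n \<and> (\<forall>i<k. idx i < n) \<and> x \<in> space (powS S n) \<and> B \<in> sets (powS S k)"
  let ?p = "proj k idx"
  have p: "?p \<in> powS S n \<rightarrow>\<^sub>M powS S k" using a by (intro proj_meas) auto
  have px: "?p x \<in> space (powS S k)" using p a by (auto dest: measurable_space)
  have Fn: "F n \<in> powS S n \<rightarrow>\<^sub>M prob_algebra (powS S n)" 
    and Gn: "G n \<in> powS S n \<rightarrow>\<^sub>M prob_algebra (powS S n)"
    and Fk: "F k \<in> powS S k \<rightarrow>\<^sub>M prob_algebra (powS S k)" 
    and Gk: "G k \<in> powS S k \<rightarrow>\<^sub>M prob_algebra (powS S k)"
    using F G a unfolding consistent_def markov_kernel_def by auto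
  have Fnx: "F n x \<in> space (prob_algebra (powS S n))" using Fn a by (auto dest: measurable_space)
  have Fkx: "F k (?p x) \<in> space (prob_algebra (powS S k))" using Fk px by (auto dest: measurable_space)
  have spFnx: "space (F n x) = space (powS S n)" using Fnx
    by (metis (mono_tags, lifting) mem_Collect_eq sets_eq_imp_space_eq space_prob_algebra)
  have pB: "?p -` B \<inter> space (powS S n) \<in> sets (powS S n)" using p a by auto
  have distr_eq: "distr (F n x) (powS S k) ?p = F k (?p x)"
  proof (rule measure_eqI)
    show "sets (distr (F n x) (powS S k) ?p) = sets (F k (?p x))"
      using Fkx by (simp add: space_prob_algebra)
  next
    fix A assume "A \<in> sets (distr (F n x) (powS S k) ?p)"
    then have A: "A \<in> sets (powS S k)" by simp
    have "emeasure (distr (F n x) (powS S k) ?p) A = emeasure (F n x) (?p -` A \<inter> space (F n x))"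
      using p Fnx A by (intro emeasure_distr) (auto simp: space_prob_algebra cong: measurable_cong_sets)
    also have "\<dots> = emeasure (F k (?p x)) A"
      using F a A unfolding consistent_def spFnx by blast
    finally show "emeasure (distr (F n x) (powS S k) ?p) A = emeasure (F k (?p x)) A" .
  qed
  have Gkm: "(\<lambda>z. emeasure (G k z) B) \<in> borel_measurable (powS S k)"
    using Gk a by (intro measurable_emeasure_subprob_algebra[THEN measurable_compose[rotated]] measurable_prob_algebraD) auto
  have "emeasure (H n x) (?p -` B \<inter> space (powS S n)) = emeasure (F n x \<bind> G n) (?p -` B \<inter> space (powS S n))"
    using H a by auto
  also have "\<dots> = (\<integral>\<^sup>+y. emeasure (G n y) (?p -` B \<inter> space (powS S n)) \<partial>F n x)"
    using Fnx Gn pB by (rule emeasure_bind_prob_algebra)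
  also have "\<dots> = (\<integral>\<^sup>+y. emeasure (G k (?p y)) B \<partial>F n x)"
    using G a unfolding consistent_def spFnx by (intro nn_integral_cong) (auto simp: spFnx)
  also have "\<dots> = (\<integral>\<^sup>+z. emeasure (G k z) B \<partial>distr (F n x) (powS S k) ?p)"
    using Gkm p Fnx by (subst nn_integral_distr) (auto simp: space_prob_algebra cong: measurable_cong_sets)
  also have "\<dots> = (\<integral>\<^sup>+z. emeasure (G k z) B \<partial>F k (?p x))" by (simp add: distr_eq)
  also have "\<dots> = emeasure (F k (?p x) \<bind> G k) B"
    using Fkx Gk a by (intro emeasure_bind_prob_algebra[symmetric]) auto
  also have "\<dots> = emeasure (H k (?p x)) B" using H a px by auto
  finally show "emeasure (H n x) (?p -` B \<inter> space (powS S n)) = emeasure (H k (?p x)) B" .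
qed

theorem lemma6p2:
  fixes S :: "'a measure"
    and K L :: "'a \<Rightarrow> 'a measure"
    and KK LL :: "nat \<Rightarrow> (nat \<Rightarrow> 'a) \<Rightarrow> (nat \<Rightarrow> 'a) measure"
  assumes "markov_kernel S K" and "markov_kernel S L"
    and "consistent_extension S K KK" and "consistent_extension S L LL"
  shows "consistent_extension S (kcomp K L) (\<lambda>n. kcomp (KK n) (LL n))"
proof -
  define F where "F = (\<lambda>n. if n = 1 then lift1 S K else KK n)"
  define G where "G = (\<lambda>n. if n = 1 then lift1 S L else LL n)"
  have cF: "consistent S F" and cG: "consistent S G"
    using assms(3,4) unfolding consistent_extension_def F_def G_def by auto
  let ?e = "\<lambda>y. \<lambda>j\<in>{..<1::nat}. y"
  have e: "?e \<in> S \<rightarrow>\<^sub>M powS S 1" unfolding powS_def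
    by (intro measurable_restrict) auto
  have G1: "lift1 S L \<in> powS S 1 \<rightarrow>\<^sub>M prob_algebra (powS S 1)"
    using cG unfolding consistent_def markov_kernel_def G_def by (metis order_refl)
  have eq1: "lift1 S (kcomp K L) x = lift1 S K x \<bind> lift1 S L" if x: "x \<in> space (powS S 1)" for x
  proof -
    have x0: "x 0 \<in> space S" using x by (auto simp: powS_def space_PiM)
    have Kx: "K (x 0) \<in> space (prob_algebra S)"
      using assms(1) x0 unfolding markov_kernel_def by (auto dest: measurable_space)
    have ne: "space (K (x 0)) \<noteq> {}" using Kx
      by (simp add: space_prob_algebra prob_space.not_empty)
    have Km: "K (x 0) \<in> space (subprob_algebra S)" using Kx
      by (auto simp: space_prob_algebra space_subprob_algebra prob_space_imp_subprob_space)
    have eK: "?e \<in> K (x 0) \<rightarrow>\<^sub>M powS S 1" using e Kx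
      by (auto simp: space_prob_algebra cong: measurable_cong_sets)
    have "lift1 S K x \<bind> lift1 S L = distr (K (x 0)) (powS S 1) ?e \<bind> lift1 S L"
      unfolding lift1_def ..
    also have "\<dots> = K (x 0) \<bind> (\<lambda>a. lift1 S L (?e a))"
      using eK G1 ne by (intro bind_distr measurable_prob_algebraD)
    also have "\<dots> = K (x 0) \<bind> (\<lambda>a. distr (L a) (powS S 1) ?e)"
      unfolding lift1_def by simp
    also have "\<dots> = distr (K (x 0) \<bind> L) (powS S 1) ?e"
    proof (rule distr_bind[symmetric])
      have sK: "sets (K (x 0)) = sets S" using Kx by (simp add: space_prob_algebra)
      show "L \<in> K (x 0) \<rightarrow>\<^sub>M subprob_algebra S"
        using assms(2) unfolding markov_kernel_def measurable_cong_sets[OF sK refl]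
        by (rule measurable_prob_algebraD)
    qed (use ne e in auto)
    finally show ?thesis unfolding lift1_def kcomp_def by simp
  qed
  have "consistent S (\<lambda>n. if n = 1 then lift1 S (kcomp K L) else kcomp (KK n) (LL n))"
    by (rule cons_bind[OF cF cG]) (auto simp: F_def G_def eq1[unfolded kcomp_def] kcomp_def)
  then show ?thesis unfolding consistent_extension_def .
qed

end
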